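(* For every odd integer $g\geqslant1$, $J_g^-=J_{g-1}^-$.
   Context: $\zeta_k^-\in\mathbb{C}[\alpha,\gamma]$: $\zeta^-_i=0$ for $i<0$, $\zeta^-_0=1$, $\zeta^-_{k+1}=\alpha\zeta^-_k-16k^2\zeta^-_{k-1}+2k(k-1)\gamma\zeta^-_{k-2}$ for $k$ odd and $\zeta^-_{k+1}=\alpha\zeta^-_k+2k(k-1)\gamma\zeta^-_{k-2}$ for $k$ even ($k\geqslant0$); $J^-_k$ is the ideal $(\zeta^-_k,\zeta^-_{k+1},\zeta^-_{k+2})$ of $\mathbb{C}[\alpha,\gamma]$. *)

theory Defs
  imports Complex_Main "HOL-Computational_Algebra.Polynomial"
begin

text \<open>The ring C[alpha,gamma] is modelled as complex poly poly:
  polynomials in gamma (outer variable) whose coefficients are polynomials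
  in alpha (inner variable).\<close>

definition var_alpha :: "complex poly poly" where
  "var_alpha = [: [:0, 1:] :]"

definition var_gamma :: "complex poly poly" where
  "var_gamma = [:0, 1:]"

text \<open>zeta_minus k for k >= 0 (zeta_i = 0 for i < 0 only enters through terms
  whose coefficient vanishes: 16 k^2 zeta_(k-1) occurs only for odd k >= 1,
  and 2k(k-1) gamma zeta_(k-2) has coefficient 0 for k < 2).\<close>
fun zeta_minus :: "nat \<Rightarrow> complex poly poly" where
  "zeta_minus 0 = 1"
| "zeta_minus (Suc k) =
     var_alpha * zeta_minus k
     - (if odd k then of_nat (16 * k\<^sup>2) * zeta_minus (k - 1) else 0)
     + of_nat (2 * k * (k - 1)) * var_gamma * zeta_minus (k - 2)"

definition ideal3 :: "'a::comm_ring_1 \<Rightarrow> 'a \<Rightarrow> 'a \<Rightarrow> 'a set" where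
  "ideal3 x y z = {a * x + b * y + c * z | a b c. True}"

definition J_minus :: "nat \<Rightarrow> complex poly poly set" where
  "J_minus k = ideal3 (zeta_minus k) (zeta_minus (k + 1)) (zeta_minus (k + 2))"

end

theory Submission
  imports Defs "HOL-Computational_Algebra.Computational_Algebra" "HOL-Computational_Algebra.Field_as_Ring"
begin

fun PF :: "nat \<Rightarrow> nat \<Rightarrow> 'a::field_char_0 poly" and QF :: "nat \<Rightarrow> nat \<Rightarrow> 'a::field_char_0 poly" where
  "PF m 0 = 1"
| "PF m (Suc l) = smult (inverse (of_nat (2*(2*m-2*l)*(2*m-2*l-1))))
     ((if l = 0 then 0 else QF m (l-1)) - [:0,1:] * PF m l)"
| "QF m l = smult (inverse (of_nat (2*(2*m-2*l+1)*(2*m-2*l))))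
     ((if l = 0 then 0 else - ([:0,1:] * QF m (l-1))) + smult (of_nat (16*(2*m-2*l+1)^2)) (PF m l))"

declare QF.simps[simp del]

definition sg :: "nat \<Rightarrow> real \<Rightarrow> real" where "sg l x = (if even l then 1 else -x)"

lemma sign_aux:
  fixes x :: real
  assumes x: "x \<noteq> 0"
  shows "(l \<le> m \<longrightarrow> 0 < sg l x * poly (PF m l) x) \<and> (l < m \<longrightarrow> 0 < sg l x * poly (QF m l) x)"
proof (induction l rule: less_induct)
  case (less l)
  have x2: "0 < x * x" using x by (auto simp: zero_less_mult_iff linorder_neq_iff)
  have P: "l \<le> m \<longrightarrow> 0 < sg l x * poly (PF m l) x"
  proof (cases l)
    case 0 then show ?thesis by (simp add: sg_def)
  next
    case (Suc k)
    show ?thesis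
    proof
      assume lm: "l \<le> m"
      have b: "0 < (2*(2*m-2*k)*(2*m-2*k-1) :: nat)" using lm Suc by simp
      have Pk: "0 < sg k x * poly (PF m k) x" using less[of k] Suc lm by auto
      have t1: "0 < sg l x * (- (x * poly (PF m k) x))"
        using Pk x2 Suc by (auto simp: sg_def mult.assoc[symmetric] intro: mult_pos_pos)
      have t2: "0 \<le> sg l x * (if k = 0 then 0 else poly (QF m (k-1)) x)"
      proof (cases k)
        case 0 then show ?thesis by simp
      next
        case (Suc j)
        have "0 < sg j x * poly (QF m j) x" using less[of j] \<open>l = Suc k\<close> Suc lm by auto
        then show ?thesis using Suc \<open>l = Suc k\<close> by (auto simp: sg_def)
      qed
      have "sg l x * poly (PF m l) x = inverse (real (2*(2*m-2*k)*(2*m-2*k-1))) *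
         (sg l x * (if k = 0 then 0 else poly (QF m (k-1)) x) + sg l x * (- (x * poly (PF m k) x)))"
        using Suc by (simp add: algebra_simps)
      moreover have "0 < inverse (real (2*(2*m-2*k)*(2*m-2*k-1)))" using b by (simp only: inverse_positive_iff_positive of_nat_0_less_iff)
      ultimately show "0 < sg l x * poly (PF m l) x" using t1 t2
        by (metis add_pos_nonneg add.commute mult_pos_pos)
    qed
  qed
  have Q: "l < m \<longrightarrow> 0 < sg l x * poly (QF m l) x"
  proof
    assume lm: "l < m"
    have b: "0 < (2*(2*m-2*l+1)*(2*m-2*l) :: nat)" using lm by simp
    have t1: "0 < sg l x * poly (smult (of_nat (16*(2*m-2*l+1)^2)) (PF m l)) x"
    proof -
      have k: "0 < (of_nat (16*(2*m-2*l+1)^2) :: real)" by simp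
      have e: "sg l x * poly (smult (of_nat (16*(2*m-2*l+1)^2)) (PF m l)) x
        = of_nat (16*(2*m-2*l+1)^2) * (sg l x * poly (PF m l) x)" by (simp only: poly_smult mult.left_commute)
      have "0 < of_nat (16*(2*m-2*l+1)^2) * (sg l x * poly (PF m l) x)"
        using k P lm by (metis less_imp_le mult_pos_pos)
      then show ?thesis by (simp only: e)
    qed
    have t2: "0 \<le> sg l x * poly (if l = 0 then 0 else - ([:0,1:] * QF m (l-1))) x"
    proof (cases l)
      case 0 then show ?thesis by simp
    next
      case (Suc j)
      have "0 < sg j x * poly (QF m j) x" using less[of j] Suc lm by auto
      then show ?thesis using Suc x2 by (auto simp: sg_def mult.assoc[symmetric] intro: mult_nonneg_nonneg)
    qed
    have "sg l x * poly (QF m l) x = inverse (real (2*(2*m-2*l+1)*(2*m-2*l))) *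
         (sg l x * poly (if l = 0 then 0 else - ([:0,1:] * QF m (l-1))) x
          + sg l x * poly (smult (of_nat (16*(2*m-2*l+1)^2)) (PF m l)) x)"
      by (subst QF.simps) (simp add: algebra_simps)
    moreover have "0 < inverse (real (2*(2*m-2*l+1)*(2*m-2*l)))" using b by (simp only: inverse_positive_iff_positive of_nat_0_less_iff)
    ultimately show "0 < sg l x * poly (QF m l) x" using t1 t2
      by (metis add_nonneg_pos mult_pos_pos)
  qed
  show ?case using P Q by blast
qed

lemma ideal3_iff: "u \<in> ideal3 x y z \<longleftrightarrow> (\<exists>a b c. u = a*x+b*y+c*z)"
  by (simp add: ideal3_def)

lemma ideal3_0: "0 \<in> ideal3 x y z"
  unfolding ideal3_iff by (rule exI[of _ 0], rule exI[of _ 0], rule exI[of _ 0]) simp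
lemma ideal3_gen1: "x \<in> ideal3 x y z"
  unfolding ideal3_iff by (rule exI[of _ 1], rule exI[of _ 0], rule exI[of _ 0]) simp
lemma ideal3_gen2: "y \<in> ideal3 x y z"
  unfolding ideal3_iff by (rule exI[of _ 0], rule exI[of _ 1], rule exI[of _ 0]) simp
lemma ideal3_gen3: "z \<in> ideal3 x y z"
  unfolding ideal3_iff by (rule exI[of _ 0], rule exI[of _ 0], rule exI[of _ 1]) simp
lemma ideal3_add:
  assumes "u \<in> ideal3 x y z" "v \<in> ideal3 x y z" shows "u + v \<in> ideal3 x y z"
proof -
  obtain a b c where 1: "u = a*x+b*y+c*z" using assms(1) unfolding ideal3_iff by blast
  obtain a' b' c' where 2: "v = a'*x+b'*y+c'*z" using assms(2) unfolding ideal3_iff by blast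
  have "u + v = (a+a')*x+(b+b')*y+(c+c')*z" unfolding 1 2 by (simp add: algebra_simps)
  then show ?thesis unfolding ideal3_iff by blast
qed
lemma ideal3_mult:
  assumes "u \<in> ideal3 x y z" shows "r * u \<in> ideal3 x y z"
proof -
  obtain a b c where 1: "u = a*x+b*y+c*z" using assms(1) unfolding ideal3_iff by blast
  have "r * u = (r*a)*x+(r*b)*y+(r*c)*z" unfolding 1 by (simp add: algebra_simps)
  then show ?thesis unfolding ideal3_iff by blast
qed
lemma ideal3_neg: "u \<in> ideal3 x y z \<Longrightarrow> - u \<in> ideal3 x y z"
  using ideal3_mult[of u x y z "-1"] by simp
lemma ideal3_diff: "u \<in> ideal3 x y z \<Longrightarrow> v \<in> ideal3 x y z \<Longrightarrow> u - v \<in> ideal3 x y z"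
  using ideal3_add[OF _ ideal3_neg, of u x y z v] by simp
lemma ideal3_subset:
  assumes "x' \<in> ideal3 x y z" "y' \<in> ideal3 x y z" "z' \<in> ideal3 x y z"
  shows "ideal3 x' y' z' \<subseteq> ideal3 x y z"
proof
  fix u assume "u \<in> ideal3 x' y' z'"
  then obtain a b c where 1: "u = a*x'+b*y'+c*z'" unfolding ideal3_iff by blast
  show "u \<in> ideal3 x y z" unfolding 1 using assms by (intro ideal3_add ideal3_mult)
qed

lemma const_inv: "K \<noteq> 0 \<Longrightarrow> [:[:inverse (of_nat K :: complex):]:] * (of_nat K :: complex poly poly) = 1"
proof -
  assume K: "K \<noteq> 0"
  have "(of_nat K :: complex poly poly) = [:[:of_nat K:]:]" by (simp add: of_nat_poly)
  then show ?thesis using K by (simp add: one_pCons)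
qed

lemma ideal3_cancel:
  fixes K :: nat
  assumes "K \<noteq> 0" "of_nat K * u \<in> ideal3 x y z"
  shows "(u :: complex poly poly) \<in> ideal3 x y z"
proof -
  have "[:[:inverse (of_nat K :: complex):]:] * (of_nat K * u) \<in> ideal3 x y z"
    by (rule ideal3_mult) fact
  then show ?thesis by (simp only: mult.assoc[symmetric] const_inv[OF assms(1)] mult_1)
qed

lemma pc_split: "\<exists>T. (P :: complex poly poly) = [:coeff P 0:] + var_gamma * T"
proof (cases P)
  case (pCons q T)
  have "P = [:coeff P 0:] + var_gamma * T" unfolding pCons var_gamma_def by simp
  then show ?thesis by blast
qed

lemma coeff0_rec: "coeff (zeta_minus (Suc k)) 0 = [:0,1:] * coeff (zeta_minus k) 0
   - (if odd k then of_nat (16*k^2) * coeff (zeta_minus (k-1)) 0 else 0)"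
  by (simp add: coeff_mult_0 var_alpha_def var_gamma_def of_nat_poly)

lemma PF_of_real:
  "poly (PF m l :: complex poly) (of_real x) = of_real (poly (PF m l :: real poly) x) \<and>
   poly (QF m l :: complex poly) (of_real x) = of_real (poly (QF m l :: real poly) x)"
proof (induction l rule: less_induct)
  case (less l)
  have P: "poly (PF m l :: complex poly) (of_real x) = of_real (poly (PF m l :: real poly) x)"
  proof (cases l)
    case 0 then show ?thesis by simp
  next
    case (Suc k)
    have "poly (PF m k :: complex poly) (of_real x) = of_real (poly (PF m k :: real poly) x)"
      using less[of k] Suc by simp
    moreover have "k \<noteq> 0 \<Longrightarrow> poly (QF m (k-1) :: complex poly) (of_real x) = of_real (poly (QF m (k-1) :: real poly) x)"
      using less[of "k-1"] Suc by simp
    ultimately show ?thesis using Suc by (simp add: of_real_mult)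
  qed
  have Q: "poly (QF m l :: complex poly) (of_real x) = of_real (poly (QF m l :: real poly) x)"
  proof -
    have "l \<noteq> 0 \<Longrightarrow> poly (QF m (l-1) :: complex poly) (of_real x) = of_real (poly (QF m (l-1) :: real poly) x)"
      using less[of "l-1"] by simp
    then show ?thesis using P by (subst (1 2) QF.simps) (simp add: of_real_mult)
  qed
  show ?case using P Q by blast
qed

lemma h_nonzero:
  fixes x :: real
  assumes x: "x \<noteq> 0" and m: "m \<ge> 1"
  shows "poly (QF m (m-1) - [:0,1:] * PF m m) x \<noteq> 0"
proof -
  have x2: "0 < x * x" using x by (auto simp: zero_less_mult_iff linorder_neq_iff)
  have q: "0 < sg (m-1) x * poly (QF m (m-1)) x" using sign_aux[OF x, of "m-1" m] m by simp
  have p: "0 < sg m x * poly (PF m m) x" using sign_aux[OF x, of m m] by simp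
  have p2: "0 < sg (m-1) x * (- (x * poly (PF m m) x))"
  proof (cases "even m")
    case True
    then have "odd (m-1)" using m by simp
    then show ?thesis using p True x2 by (auto simp: sg_def mult.assoc[symmetric] intro: mult_pos_pos)
  next
    case False
    then have "even (m-1)" using m by simp
    then show ?thesis using p False by (simp add: sg_def)
  qed
  have "sg (m-1) x * poly (QF m (m-1) - [:0,1:] * PF m m) x
      = sg (m-1) x * poly (QF m (m-1)) x + sg (m-1) x * (- (x * poly (PF m m) x))"
    by (simp add: algebra_simps)
  also have "\<dots> > 0" using q p2 by simp
  finally show ?thesis by auto
qed

lemma e_even_rec: "coeff (zeta_minus (Suc (Suc (2*j)))) 0
   = ([:0,1:]^2 - of_nat (16*(2*j+1)^2)) * coeff (zeta_minus (2*j)) 0"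
proof -
  have 1: "coeff (zeta_minus (Suc (2*j))) 0 = [:0,1:] * coeff (zeta_minus (2*j)) 0"
    using coeff0_rec[of "2*j"] by simp
  have 2: "coeff (zeta_minus (Suc (Suc (2*j)))) 0 = [:0,1:] * coeff (zeta_minus (Suc (2*j))) 0
     - of_nat (16*(2*j+1)^2) * coeff (zeta_minus (2*j)) 0"
    using coeff0_rec[of "Suc (2*j)"] by simp
  show ?thesis unfolding 2 1 by (simp add: power2_eq_square left_diff_distrib)
qed

lemma e_roots: "poly (coeff (zeta_minus (2*j)) 0) r = 0 \<Longrightarrow> \<exists>x::real. x \<noteq> 0 \<and> r = of_real x"
proof (induction j)
  case 0 then show ?case by simp
next
  case (Suc j)
  have eq: "2 * Suc j = Suc (Suc (2*j))" by simp
  have "poly (coeff (zeta_minus (2*Suc j)) 0) r = poly (([:0,1:]^2 - of_nat (16*(2*j+1)^2)) * coeff (zeta_minus (2*j)) 0) r"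
    by (simp only: eq e_even_rec)
  also have "\<dots> = (r^2 - of_nat (16*(2*j+1)^2)) * poly (coeff (zeta_minus (2*j)) 0) r"
    by (simp only: poly_mult poly_diff poly_power poly_pCons poly_of_nat) simp
  finally have "(r^2 - of_nat (16*(2*j+1)^2)) * poly (coeff (zeta_minus (2*j)) 0) r = 0"
    using Suc.prems by simp
  then have "r^2 - of_nat (16*(2*j+1)^2) = 0 \<or> poly (coeff (zeta_minus (2*j)) 0) r = 0"
    by (simp only: mult_eq_0_iff)
  then show ?case
  proof
    assume h: "r^2 - of_nat (16*(2*j+1)^2) = 0"
    have "(of_nat (16*(2*j+1)^2) :: complex) = (of_real (4*(2*real j+1)))^2"
      by (simp add: power2_eq_square algebra_simps)
    then have "r^2 = (of_real (4*(2*real j+1)))^2" using h by simp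
    then have "r = of_real (4*(2*real j+1)) \<or> r = - of_real (4*(2*real j+1))"
      by (simp only: power2_eq_iff)
    then show ?thesis
    proof
      assume "r = of_real (4*(2*real j+1))"
      then show ?thesis by (intro exI[of _ "4*(2*real j+1)"]) auto
    next
      assume "r = - of_real (4*(2*real j+1))"
      then show ?thesis by (intro exI[of _ "-(4*(2*real j+1))"]) auto
    qed
  next
    assume "poly (coeff (zeta_minus (2*j)) 0) r = 0"
    then show ?thesis by (rule Suc.IH)
  qed
qed

declare zeta_minus.simps(2)[simp del]

abbreviation "zz \<equiv> zeta_minus"
abbreviation "aa \<equiv> var_alpha"
abbreviation "cc \<equiv> var_gamma"

lemma z_even_step: "even k \<Longrightarrow> zz (Suc k) = aa * zz k + of_nat (2*k*(k-1)) * cc * zz (k-2)"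
  by (simp add: zeta_minus.simps(2))
lemma z_odd_step: "odd k \<Longrightarrow> zz (Suc k) = aa * zz k - of_nat (16*k^2) * zz (k-1) + of_nat (2*k*(k-1)) * cc * zz (k-2)"
  by (simp add: zeta_minus.simps(2))

lemma Lc_mult: "[:(p::complex poly) * q:] = [:p:] * [:q:]" by (simp add: mult.commute)
lemma Lc_add: "[:p + q:] = [:p:] + [:q:]" by simp
lemma Lc_diff: "[:p - q:] = [:p:] - [:q:]" by simp
lemma Lc_neg: "[:- p:] = - [:p:]" by simp
lemma Lc_smult: "[:smult s p:] = [:[:s:]:] * [:p:]" by simp
lemma Lc_alpha: "[:[:0,1:]:] = var_alpha" by (simp add: var_alpha_def)

lemma Lc_of_nat_inv:
  assumes "K \<noteq> 0"
  shows "(of_nat K :: complex poly poly) * [:smult (inverse (of_nat K)) p:] = [:p:]"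
proof -
  have "(of_nat K :: complex poly poly) * [:smult (inverse (of_nat K)) p:]
       = ([:[:inverse (of_nat K :: complex):]:] * of_nat K) * [:p:]"
    by (simp only: Lc_smult mult_ac)
  also have "\<dots> = [:p:]" by (simp only: const_inv[OF assms] mult_1)
  finally show ?thesis .
qed

abbreviation II :: "nat \<Rightarrow> complex poly poly set" where
  "II m \<equiv> ideal3 (zz (2*m+1)) (zz (2*m+2)) (zz (2*m+3))"

lemma ringP:
  fixes Z0 Z1 Z2 a B c LP LP' LQ W :: "'a::comm_ring_1"
  assumes "Z1 = a*Z2 + B*c*Z0" "B*LP' = LQ - a*LP"
  shows "B*(c^(Suc k)*Z0 - LP'*W) = (c^k*Z1 - LQ*W) - a*(c^k*Z2 - LP*W)"
proof -
  have "B*(c^(Suc k)*Z0 - LP'*W) = c^k*(B*c*Z0) - (B*LP')*W" by (simp add: algebra_simps)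
  also have "\<dots> = c^k*(Z1 - a*Z2) - (LQ - a*LP)*W" using assms by simp
  also have "\<dots> = (c^k*Z1 - LQ*W) - a*(c^k*Z2 - LP*W)" by (simp add: algebra_simps)
  finally show ?thesis .
qed

lemma ringQ:
  fixes Z0 Z1 Z2 Z3 a B E c LP LQ LQ' W :: "'a::comm_ring_1"
  assumes "Z3 = a*Z2 - E*Z1 + B*c*Z0" "B*LQ = LQ' + E*LP"
  shows "B*(c^(Suc l)*Z0 - LQ*W) = c^l*Z3 - (a*(c^l*Z2) + LQ'*W) + E*(c^l*Z1 - LP*W)"
proof -
  have "B*(c^(Suc l)*Z0 - LQ*W) = c^l*(B*c*Z0) - (B*LQ)*W" by (simp add: algebra_simps)
  also have "\<dots> = c^l*(Z3 - a*Z2 + E*Z1) - (LQ' + E*LP)*W" using assms by (simp add: algebra_simps)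
  also have "\<dots> = c^l*Z3 - (a*(c^l*Z2) + LQ'*W) + E*(c^l*Z1 - LP*W)" by (simp add: algebra_simps)
  finally show ?thesis .
qed

lemma II_gens: "zz (2*m+1) \<in> II m" "zz (2*m+2) \<in> II m" "zz (2*m+3) \<in> II m"
  by (rule ideal3_gen1 ideal3_gen2 ideal3_gen3)+

lemma C1: "cc * zz (2*m) \<in> II m"
proof -
  have e: "zz (2*m+3) = aa * zz (2*m+2) + of_nat (2*(2*m+2)*(2*m+1)) * cc * zz (2*m)"
  proof -
    have ev: "even (2*m+2)" by simp
    show ?thesis using z_even_step[OF ev] by (simp add: eval_nat_numeral)
  qed
  have "of_nat (2*(2*m+2)*(2*m+1)) * (cc * zz (2*m)) = zz (2*m+3) - aa * zz (2*m+2)"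
    unfolding e by (simp add: algebra_simps)
  also have "\<dots> \<in> II m" using II_gens by (intro ideal3_diff ideal3_mult)
  finally show ?thesis by (rule ideal3_cancel[rotated]) simp
qed

lemma chain:
  "(l \<le> m \<longrightarrow> cc^l * zz (2*m-2*l) - [:PF m l:] * zz (2*m) \<in> II m) \<and>
   (l < m \<longrightarrow> cc^(Suc l) * zz (2*m-2*l-1) - [:QF m l:] * zz (2*m) \<in> II m)"
proof (induction l rule: less_induct)
  case (less l)
  have P: "l \<le> m \<longrightarrow> cc^l * zz (2*m-2*l) - [:PF m l:] * zz (2*m) \<in> II m"
  proof (cases l)
    case 0 then show ?thesis by (simp add: ideal3_0)
  next
    case (Suc k)
    show ?thesis
    proof
      assume lm: "l \<le> m"
      have IHP: "cc^k * zz (2*m-2*k) - [:PF m k:] * zz (2*m) \<in> II m"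
        using less[of k] Suc lm by simp
      define B where "B = 2*(2*m-2*k)*(2*m-2*k-1)"
      have B0: "B \<noteq> 0" unfolding B_def using Suc lm by simp
      have ev: "even (2*m-2*k)" by simp
      have s1: "Suc (2*m-2*k) = 2*m-2*k+1" by simp
      have s2: "2*m-2*k-2 = 2*m-2*Suc k" by simp
      have e: "zz (2*m-2*k+1) = aa * zz (2*m-2*k) + of_nat B * cc * zz (2*m-2*Suc k)"
        using z_even_step[OF ev] unfolding B_def s1 s2 .
      have lc: "(of_nat B :: complex poly poly) * [:PF m (Suc k):] = [:(if k = 0 then 0 else QF m (k-1)):] - aa * [:PF m k:]"
        unfolding PF.simps(2) B_def[symmetric] Lc_of_nat_inv[OF B0] Lc_diff Lc_mult Lc_alpha ..
      have r: "of_nat B * (cc^(Suc k) * zz (2*m-2*Suc k) - [:PF m (Suc k):] * zz (2*m))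
         = (cc^k * zz (2*m-2*k+1) - [:(if k = 0 then 0 else QF m (k-1)):] * zz (2*m))
           - aa * (cc^k * zz (2*m-2*k) - [:PF m k:] * zz (2*m))"
        by (rule ringP[OF e lc])
      have T1: "cc^k * zz (2*m-2*k+1) - [:(if k = 0 then 0 else QF m (k-1)):] * zz (2*m) \<in> II m"
      proof (cases k)
        case 0 then show ?thesis using II_gens by simp
      next
        case (Suc j)
        have "cc^(Suc j) * zz (2*m-2*j-1) - [:QF m j:] * zz (2*m) \<in> II m"
          using less[of j] \<open>l = Suc k\<close> Suc lm by simp
        moreover have "2*m-2*j-1 = 2*m-2*k+1" using Suc \<open>l = Suc k\<close> lm by simp
        ultimately show ?thesis using Suc by simp
      qed
      have "of_nat B * (cc^(Suc k) * zz (2*m-2*Suc k) - [:PF m (Suc k):] * zz (2*m)) \<in> II m"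
        unfolding r by (rule ideal3_diff[OF T1 ideal3_mult[OF IHP]])
      then show "cc^l * zz (2*m-2*l) - [:PF m l:] * zz (2*m) \<in> II m"
        unfolding Suc by (rule ideal3_cancel[OF B0])
    qed
  qed
  have Q: "l < m \<longrightarrow> cc^(Suc l) * zz (2*m-2*l-1) - [:QF m l:] * zz (2*m) \<in> II m"
  proof
    assume lm: "l < m"
    have IHP: "cc^l * zz (2*m-2*l) - [:PF m l:] * zz (2*m) \<in> II m" using P lm by simp
    define B where "B = 2*(2*m-2*l+1)*(2*m-2*l)"
    define E where "E = 16*(2*m-2*l+1)^2"
    have B0: "B \<noteq> 0" unfolding B_def using lm by simp
    have od: "odd (2*m-2*l+1)" using lm by simp
    have s1: "Suc (2*m-2*l+1) = 2*m-2*l+2" by simp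
    have s2: "2*m-2*l+1-1 = 2*m-2*l" by simp
    have s3: "2*m-2*l+1-2 = 2*m-2*l-1" using lm by simp
    have e: "zz (2*m-2*l+2) = aa * zz (2*m-2*l+1) - of_nat E * zz (2*m-2*l) + of_nat B * cc * zz (2*m-2*l-1)"
      using z_odd_step[OF od] unfolding s1 s2 s3 B_def E_def by simp
    have lc: "(of_nat B :: complex poly poly) * [:QF m l:] = [:(if l = 0 then 0 else - ([:0,1:] * QF m (l-1))):] + of_nat E * [:PF m l:]"
    proof -
      have "(of_nat B :: complex poly poly) * [:QF m l:] = [:(if l = 0 then 0 else - ([:0,1:] * QF m (l-1))) + smult (of_nat E) (PF m l):]"
      proof -
        have qf: "QF m l = smult (inverse (of_nat B)) ((if l = 0 then 0 else - ([:0,1:] * QF m (l-1))) + smult (of_nat E) (PF m l))"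
          unfolding B_def E_def by (rule QF.simps)
        show ?thesis unfolding qf by (rule Lc_of_nat_inv[OF B0])
      qed
      also have "\<dots> = [:(if l = 0 then 0 else - ([:0,1:] * QF m (l-1))):] + of_nat E * [:PF m l:]"
        by (simp add: of_nat_poly)
      finally show ?thesis .
    qed
    have r: "of_nat B * (cc^(Suc l) * zz (2*m-2*l-1) - [:QF m l:] * zz (2*m))
        = cc^l * zz (2*m-2*l+2) - (aa * (cc^l * zz (2*m-2*l+1)) + [:(if l = 0 then 0 else - ([:0,1:] * QF m (l-1))):] * zz (2*m))
          + of_nat E * (cc^l * zz (2*m-2*l) - [:PF m l:] * zz (2*m))"
      by (rule ringQ[OF e lc])
    have T1: "cc^l * zz (2*m-2*l+2) \<in> II m"
    proof (cases l)
      case 0 then show ?thesis using II_gens by simp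
    next
      case (Suc j)
      have h: "cc^j * zz (2*m-2*j) - [:PF m j:] * zz (2*m) \<in> II m" using P less[of j] Suc lm by simp
      have "cc^l * zz (2*m-2*l+2) = cc * (cc^j * zz (2*m-2*j) - [:PF m j:] * zz (2*m)) + [:PF m j:] * (cc * zz (2*m))"
      proof -
        have "2*m-2*l+2 = 2*m-2*j" using Suc lm by simp
        then show ?thesis using Suc by (simp add: algebra_simps)
      qed
      also have "\<dots> \<in> II m" by (rule ideal3_add[OF ideal3_mult[OF h] ideal3_mult[OF C1]])
      finally show ?thesis .
    qed
    have T2: "aa * (cc^l * zz (2*m-2*l+1)) + [:(if l = 0 then 0 else - ([:0,1:] * QF m (l-1))):] * zz (2*m) \<in> II m"
    proof (cases l)
      case 0 then show ?thesis using II_gens by (simp add: ideal3_mult)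
    next
      case (Suc j)
      have h: "cc^(Suc j) * zz (2*m-2*j-1) - [:QF m j:] * zz (2*m) \<in> II m" using less[of j] Suc lm by simp
      have idx: "2*m-2*j-1 = 2*m-2*l+1" using Suc lm by simp
      have "aa * (cc^l * zz (2*m-2*l+1)) + [:(if l = 0 then 0 else - ([:0,1:] * QF m (l-1))):] * zz (2*m)
          = aa * (cc^(Suc j) * zz (2*m-2*j-1) - [:QF m j:] * zz (2*m))"
      proof -
        have Lq: "[:(if l = 0 then 0 else - ([:0,1:] * QF m (l-1))):] = - (aa * [:QF m j:])"
          using Suc by (simp only: Lc_neg Lc_mult Lc_alpha if_False nat.distinct diff_Suc_1)
        have g: "\<And>(a::'x::comm_ring_1) X Q W. a*X + (-(a*Q))*W = a*(X - Q*W)" by (simp add: algebra_simps)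
        show ?thesis unfolding Lq idx[symmetric] unfolding Suc by (rule g)
      qed
      then show ?thesis using h by (simp add: ideal3_mult)
    qed
    have "of_nat B * (cc^(Suc l) * zz (2*m-2*l-1) - [:QF m l:] * zz (2*m)) \<in> II m"
      unfolding r by (rule ideal3_add[OF ideal3_diff[OF T1 T2] ideal3_mult[OF IHP]])
    then show "cc^(Suc l) * zz (2*m-2*l-1) - [:QF m l:] * zz (2*m) \<in> II m"
      by (rule ideal3_cancel[OF B0])
  qed
  show ?case using P Q by blast
qed

lemma main_mem:
  assumes m: "m \<ge> 1"
  shows "zz (2*m) \<in> II m"
proof -
  define W where "W = zz (2*m)"
  have SQ: "cc^m * zz 1 - [:QF m (m-1):] * W \<in> II m"
  proof -
    have "cc^(Suc (m-1)) * zz (2*m-2*(m-1)-1) - [:QF m (m-1):] * zz (2*m) \<in> II m"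
      using chain[of "m-1" m] m by simp
    moreover have "Suc (m-1) = m" "2*m-2*(m-1)-1 = 1" using m by simp_all
    ultimately show ?thesis unfolding W_def by simp
  qed
  have SP: "cc^m * zz 0 - [:PF m m:] * W \<in> II m"
    using chain[of m m] unfolding W_def by simp
  have z1: "zz 1 = aa * zz 0" by (simp add: zeta_minus.simps(2))
  define h :: "complex poly" where "h = QF m (m-1) - [:0,1:] * PF m m"
  have hW: "[:h:] * W \<in> II m"
  proof -
    have "[:h:] * W = - (cc^m * zz 1 - [:QF m (m-1):] * W) + aa * (cc^m * zz 0 - [:PF m m:] * W)
        + cc^m * (zz 1 - aa * zz 0)"
      unfolding h_def Lc_diff Lc_mult Lc_alpha by (simp add: algebra_simps)
    also have "\<dots> = - (cc^m * zz 1 - [:QF m (m-1):] * W) + aa * (cc^m * zz 0 - [:PF m m:] * W)"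
      unfolding z1 by simp
    also have "\<dots> \<in> II m" by (rule ideal3_add[OF ideal3_neg[OF SQ] ideal3_mult[OF SP]])
    finally show ?thesis .
  qed
  define p where "p = coeff (zz (2*m+2)) 0"
  have pW: "[:p:] * W \<in> II m"
  proof -
    obtain T where T: "zz (2*m+2) = [:p:] + cc * T" using pc_split unfolding p_def by blast
    have "[:p:] * W = zz (2*m+2) * W - T * (cc * W)" unfolding T by (simp add: algebra_simps)
    also have "\<dots> \<in> II m"
    proof -
      have a1: "W * zz (2*m+2) \<in> II m" by (rule ideal3_mult[OF ideal3_gen2])
      have a2: "T * (cc * W) \<in> II m" unfolding W_def by (rule ideal3_mult[OF C1])
      show ?thesis using ideal3_diff[OF a1 a2] by (simp add: mult.commute)
    qed
    finally show ?thesis .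
  qed
  define g where "g = gcd p h"
  obtain u v where uv: "bezout_coefficients p h = (u, v)" by (cases "bezout_coefficients p h") auto
  have g_eq: "u * p + v * h = g" using bezout_coefficients[OF uv] unfolding g_def .
  have gW: "[:g:] * W \<in> II m"
  proof -
    have "[:g:] * W = [:u:] * ([:p:] * W) + [:v:] * ([:h:] * W)"
      unfolding g_eq[symmetric] Lc_add Lc_mult by (simp only: distrib_right mult.assoc)
    also have "\<dots> \<in> II m" by (rule ideal3_add[OF ideal3_mult[OF pW] ideal3_mult[OF hW]])
    finally show ?thesis .
  qed
  have noroot: "poly g r \<noteq> 0" for r
  proof
    assume gr: "poly g r = 0"
    have "g dvd p" unfolding g_def by simp
    then obtain k where "p = g * k" by (auto elim: dvdE)
    then have "poly p r = 0" using gr by simp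
    then have "poly (coeff (zz (2*(m+1))) 0) r = 0" unfolding p_def by (simp add: algebra_simps)
    then obtain x :: real where x: "x \<noteq> 0" "r = of_real x" using e_roots by blast
    have "g dvd h" unfolding g_def by simp
    then obtain k' where "h = g * k'" by (auto elim: dvdE)
    then have hr: "poly h r = 0" using gr by simp
    have "poly h r = of_real (poly (QF m (m-1) - [:0,1:] * PF m m) x)"
      unfolding h_def x(2) using PF_of_real[of m "m-1" x] PF_of_real[of m m x] by simp
    with hr have "complex_of_real (poly (QF m (m-1) - [:0,1:] * PF m m) x) = 0" by simp
    then have "poly (QF m (m-1) - [:0,1:] * PF m m) x = 0" by (simp only: of_real_eq_0_iff)
    with h_nonzero[OF x(1) m] show False by simp
  qed
  obtain g0 l where g0: "g0 \<noteq> 0" "l = 0" "g = pCons g0 l"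
    using fundamental_theorem_of_algebra_alt[of g] noroot by blast
  have "[:[:inverse g0:]:] * ([:g:] * W) \<in> II m" by (rule ideal3_mult[OF gW])
  moreover have "[:[:inverse g0:]:] * ([:g:] * W) = W"
  proof -
    have "[:[:inverse g0:]:] * [:g:] = (1 :: complex poly poly)"
      using g0 by (simp add: one_pCons)
    then show ?thesis by (simp only: mult.assoc[symmetric] mult_1)
  qed
  ultimately show ?thesis unfolding W_def by simp
qed

lemma m0_mem: "zz 0 \<in> II 0"
proof -
  have od: "odd (1::nat)" by simp
  have e: "zz 2 = aa * zz 1 - of_nat 16 * zz 0"
    using z_odd_step[OF od] by (simp add: numeral_2_eq_2)
  have "of_nat 16 * zz 0 = aa * zz 1 - zz 2" unfolding e by simp
  also have "\<dots> \<in> II 0" using ideal3_diff[OF ideal3_mult[OF ideal3_gen1] ideal3_gen2, of aa "zz 1" "zz 2" "zz 3"]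
    by (simp add: eval_nat_numeral)
  finally show ?thesis by (rule ideal3_cancel[rotated]) simp
qed

theorem corollary5p5:
  fixes g :: nat
  assumes "odd g" and "g \<ge> 1"
  shows "J_minus g = J_minus (g - 1)"
proof -
  obtain m where gm: "g = 2*m+1" using assms(1) oddE by blast
  have J1: "J_minus g = II m" unfolding J_minus_def gm by (simp add: eval_nat_numeral)
  have J0: "J_minus (g-1) = ideal3 (zz (2*m)) (zz (2*m+1)) (zz (2*m+2))"
    unfolding J_minus_def gm by (simp add: add.assoc)
  have mem: "zz (2*m) \<in> II m"
  proof (cases "m = 0")
    case True then show ?thesis using m0_mem by simp
  next
    case False then show ?thesis using main_mem by simp
  qed
  have e: "zz (2*m+3) = aa * zz (2*m+2) + of_nat (2*(2*m+2)*(2*m+1)) * cc * zz (2*m)"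
  proof -
    have ev: "even (2*m+2)" by simp
    show ?thesis using z_even_step[OF ev] by (simp add: eval_nat_numeral)
  qed
  have s1: "II m \<subseteq> ideal3 (zz (2*m)) (zz (2*m+1)) (zz (2*m+2))"
  proof (rule ideal3_subset)
    show "zz (2*m+1) \<in> ideal3 (zz (2*m)) (zz (2*m+1)) (zz (2*m+2))" by (rule ideal3_gen2)
    show "zz (2*m+2) \<in> ideal3 (zz (2*m)) (zz (2*m+1)) (zz (2*m+2))" by (rule ideal3_gen3)
    have "aa * zz (2*m+2) + (of_nat (2*(2*m+2)*(2*m+1)) * cc) * zz (2*m) \<in> ideal3 (zz (2*m)) (zz (2*m+1)) (zz (2*m+2))"
      by (rule ideal3_add[OF ideal3_mult[OF ideal3_gen3] ideal3_mult[OF ideal3_gen1]])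
    then show "zz (2*m+3) \<in> ideal3 (zz (2*m)) (zz (2*m+1)) (zz (2*m+2))" unfolding e .
  qed
  have s2: "ideal3 (zz (2*m)) (zz (2*m+1)) (zz (2*m+2)) \<subseteq> II m"
    by (rule ideal3_subset[OF mem ideal3_gen1 ideal3_gen2])
  show ?thesis unfolding J1 J0 using s1 s2 by blast
qed

end
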